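(* Every connected extended representation graph for $E$ that contains a source is isomorphic to $(F_v,\phi_v)$ for some $v\in E^0$.
   Context: $E=(E^0,E^1,s,r)$ is a row-finite directed graph; for each vertex $v$ emitting an edge a fixed edge $e^v\in s^{-1}(v)$ is called special, others nonspecial. The double graph $E_d$ has vertices $E^0$ and edges $e$ (real) and $e^*$ (ghost) for $e\in E^1$, with $s_d(e)=s(e),r_d(e)=r(e),s_d(e^* )=r(e),r_d(e^* )=s(e)$. Paths of length $0$ are vertices. For a path $p=e_1\dots e_n$ set $p^*=e_n^*\dots e_1^*$. The set $X$ of basis paths consists of the paths in $E_d$: vertices; $p,p^*$ for paths $p$ of length $\ge1$ in $E$; $pq^*$ with $p=e_1\dots e_k,q=f_1\dots f_n$ of length $\ge1$ in $E$, $r(p)=r(q)$, and $e_k\ne f_n$ or $e_k=f_n$ nonspecial. $X_v=\{x\in X: s_d(x)=v\}$. An extended representation graph for $E$ is a pair $(F,\phi)$, $F$ a directed graph, $\phi:F\to E_d$ a graph homomorphism, such that for every $w\in F^0$: (i) $w$ is a source (receives no edge) or receives exactly one edge $f_w$; (ii) if $w$ is a source or $\phi(f_w)$ is a nonspecial real edge, $\phi$ maps $s^{-1}(w)$ bijectively onto $s_d^{-1}(\phi(w))$; (iii) if $\phi(f_w)$ is a special real edge, onto $s_d^{-1}(\phi(w))\setminus\{\phi(f_w)^*\}$; (iv) if $\phi(f_w)$ is a ghost edge, onto the ghost edges in $s_d^{-1}(\phi(w))$. An isomorphism $(F,\phi)\to(G,\psi)$ is a graph isomorphism $\alpha$ with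 $\psi\circ\alpha=\phi$. $F$ is connected if any two vertices are joined by a path when edge directions are ignored. $(F_v,\phi_v)$ for $v\in E^0$: vertices $w_x$ ($x\in X_v$), edges $f_x$ ($x\in X_v\setminus\{v\}$) from $w_{x'}$ to $w_x$ where $x'$ is $x$ with its last edge removed ($x'=v$ if $|x|=1$); $\phi_v(w_x)=r_d(x)$, $\phi_v(f_x)=$ last edge of $x$. *)

theory Defs
  imports Main
begin

text \<open>The special edges are given by a choice function sp: for every vertex v
that emits an edge, sp v is the special edge emitted by v. An edge e is special iff
e = sp (s e).\<close>

definition dgraph :: "'v set \<Rightarrow> 'e set \<Rightarrow> ('e \<Rightarrow> 'v) \<Rightarrow> ('e \<Rightarrow> 'v) \<Rightarrow> bool" where
  "dgraph V Ed src rng \<longleftrightarrow> (\<forall>e\<in>Ed. src e \<in> V \<and> rng e \<in> V)"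

definition row_finite :: "'v set \<Rightarrow> 'e set \<Rightarrow> ('e \<Rightarrow> 'v) \<Rightarrow> bool" where
  "row_finite V Ed src \<longleftrightarrow> (\<forall>v\<in>V. finite {e\<in>Ed. src e = v})"

definition special_choice :: "'v set \<Rightarrow> 'e set \<Rightarrow> ('e \<Rightarrow> 'v) \<Rightarrow> ('v \<Rightarrow> 'e) \<Rightarrow> bool" where
  "special_choice V Ed src sp \<longleftrightarrow>
     (\<forall>v\<in>V. (\<exists>e\<in>Ed. src e = v) \<longrightarrow> sp v \<in> Ed \<and> src (sp v) = v)"

text \<open>Edges of the double graph: real edges e and ghost edges e*.\<close>
datatype 'e dedge = Re 'e | Gh 'e

definition dedges :: "'e set \<Rightarrow> 'e dedge set" where
  "dedges E1 = Re ` E1 \<union> Gh ` E1"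

fun sd :: "('e \<Rightarrow> 'v) \<Rightarrow> ('e \<Rightarrow> 'v) \<Rightarrow> 'e dedge \<Rightarrow> 'v" where
  "sd s r (Re e) = s e"
| "sd s r (Gh e) = r e"

fun rd :: "('e \<Rightarrow> 'v) \<Rightarrow> ('e \<Rightarrow> 'v) \<Rightarrow> 'e dedge \<Rightarrow> 'v" where
  "rd s r (Re e) = r e"
| "rd s r (Gh e) = s e"

fun is_ghost :: "'e dedge \<Rightarrow> bool" where
  "is_ghost (Re e) = False"
| "is_ghost (Gh e) = True"

definition epath :: "'e set \<Rightarrow> ('e \<Rightarrow> 'v) \<Rightarrow> ('e \<Rightarrow> 'v) \<Rightarrow> 'e list \<Rightarrow> bool" where
  "epath E1 s r p \<longleftrightarrow> p \<noteq> [] \<and> set p \<subseteq> E1 \<and>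
     (\<forall>i. Suc i < length p \<longrightarrow> r (p ! i) = s (p ! Suc i))"

text \<open>Nonempty basis paths x with s_d(x) = v, as lists of edges of E_d:
  p, p* and p q* (with the stated condition on the last edges).\<close>
definition basis_path ::
  "'e set \<Rightarrow> ('e \<Rightarrow> 'v) \<Rightarrow> ('e \<Rightarrow> 'v) \<Rightarrow> ('v \<Rightarrow> 'e) \<Rightarrow> 'v \<Rightarrow> 'e dedge list \<Rightarrow> bool" where
  "basis_path E1 s r sp v x \<longleftrightarrow>
     (\<exists>p. epath E1 s r p \<and> s (hd p) = v \<and> x = map Re p)
   \<or> (\<exists>q. epath E1 s r q \<and> r (last q) = v \<and> x = map Gh (rev q))
   \<or> (\<exists>p q. epath E1 s r p \<and> epath E1 s r q \<and> s (hd p) = v \<and> r (last p) = r (last q)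
        \<and> (last p \<noteq> last q \<or> last p \<noteq> sp (s (last p)))
        \<and> x = map Re p @ map Gh (rev q))"

text \<open>X_v: the vertex v is represented by the empty list.\<close>
definition Xv ::
  "'e set \<Rightarrow> ('e \<Rightarrow> 'v) \<Rightarrow> ('e \<Rightarrow> 'v) \<Rightarrow> ('v \<Rightarrow> 'e) \<Rightarrow> 'v \<Rightarrow> 'e dedge list set" where
  "Xv E1 s r sp v = {[]} \<union> {x. basis_path E1 s r sp v x}"

text \<open>The representation graph (F_v, phi_v): vertices w_x indexed by x \<in> X_v,
  edges f_x indexed by x \<in> X_v - {v}, f_x goes from w_{butlast x} to w_x.\<close>
definition Fv_V :: "'e set \<Rightarrow> ('e \<Rightarrow> 'v) \<Rightarrow> ('e \<Rightarrow> 'v) \<Rightarrow> ('v \<Rightarrow> 'e) \<Rightarrow> 'v \<Rightarrow> 'e dedge list set" where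
  "Fv_V E1 s r sp v = Xv E1 s r sp v"

definition Fv_E :: "'e set \<Rightarrow> ('e \<Rightarrow> 'v) \<Rightarrow> ('e \<Rightarrow> 'v) \<Rightarrow> ('v \<Rightarrow> 'e) \<Rightarrow> 'v \<Rightarrow> 'e dedge list set" where
  "Fv_E E1 s r sp v = Xv E1 s r sp v - {[]}"

definition Fv_src :: "'e dedge list \<Rightarrow> 'e dedge list" where
  "Fv_src x = butlast x"

definition Fv_rng :: "'e dedge list \<Rightarrow> 'e dedge list" where
  "Fv_rng x = x"

definition Fv_phi0 :: "('e \<Rightarrow> 'v) \<Rightarrow> ('e \<Rightarrow> 'v) \<Rightarrow> 'v \<Rightarrow> 'e dedge list \<Rightarrow> 'v" where
  "Fv_phi0 s r v x = (if x = [] then v else rd s r (last x))"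

definition Fv_phi1 :: "'e dedge list \<Rightarrow> 'e dedge" where
  "Fv_phi1 x = last x"

definition hom_to_double ::
  "'v set \<Rightarrow> 'e set \<Rightarrow> ('e \<Rightarrow> 'v) \<Rightarrow> ('e \<Rightarrow> 'v) \<Rightarrow>
   'w set \<Rightarrow> 'f set \<Rightarrow> ('f \<Rightarrow> 'w) \<Rightarrow> ('f \<Rightarrow> 'w) \<Rightarrow> ('w \<Rightarrow> 'v) \<Rightarrow> ('f \<Rightarrow> 'e dedge) \<Rightarrow> bool" where
  "hom_to_double E0 E1 s r FV FE sF rF phi0 phi1 \<longleftrightarrow>
     (\<forall>w\<in>FV. phi0 w \<in> E0) \<and>
     (\<forall>f\<in>FE. phi1 f \<in> dedges E1 \<and> phi0 (sF f) = sd s r (phi1 f) \<and> phi0 (rF f) = rd s r (phi1 f))"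

definition ext_rep_graph ::
  "'v set \<Rightarrow> 'e set \<Rightarrow> ('e \<Rightarrow> 'v) \<Rightarrow> ('e \<Rightarrow> 'v) \<Rightarrow> ('v \<Rightarrow> 'e) \<Rightarrow>
   'w set \<Rightarrow> 'f set \<Rightarrow> ('f \<Rightarrow> 'w) \<Rightarrow> ('f \<Rightarrow> 'w) \<Rightarrow> ('w \<Rightarrow> 'v) \<Rightarrow> ('f \<Rightarrow> 'e dedge) \<Rightarrow> bool" where
  "ext_rep_graph E0 E1 s r sp FV FE sF rF phi0 phi1 \<longleftrightarrow>
     dgraph FV FE sF rF \<and> hom_to_double E0 E1 s r FV FE sF rF phi0 phi1 \<and>
     (\<forall>w\<in>FV.
        (let out = {f\<in>FE. sF f = w};
             dout = {d\<in>dedges E1. sd s r d = phi0 w} in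
         (\<not> (\<exists>f\<in>FE. rF f = w) \<and> bij_betw phi1 out dout)
       \<or> (\<exists>f\<in>FE. rF f = w \<and> (\<forall>g\<in>FE. rF g = w \<longrightarrow> g = f) \<and>
            (case phi1 f of
               Re e \<Rightarrow> (if e = sp (s e) then bij_betw phi1 out (dout - {Gh e})
                        else bij_betw phi1 out dout)
             | Gh e \<Rightarrow> bij_betw phi1 out {d\<in>dout. is_ghost d}))))"

definition connected_graph :: "'w set \<Rightarrow> 'f set \<Rightarrow> ('f \<Rightarrow> 'w) \<Rightarrow> ('f \<Rightarrow> 'w) \<Rightarrow> bool" where
  "connected_graph FV FE sF rF \<longleftrightarrow>
     (let adj = {(sF f, rF f) | f. f \<in> FE} in
      \<forall>a\<in>FV. \<forall>b\<in>FV. (a, b) \<in> (adj \<union> adj\<inverse>)\<^sup>*)"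

definition has_source :: "'w set \<Rightarrow> 'f set \<Rightarrow> ('f \<Rightarrow> 'w) \<Rightarrow> bool" where
  "has_source FV FE rF \<longleftrightarrow> (\<exists>w\<in>FV. \<not> (\<exists>f\<in>FE. rF f = w))"

definition rep_iso ::
  "'w set \<Rightarrow> 'f set \<Rightarrow> ('f \<Rightarrow> 'w) \<Rightarrow> ('f \<Rightarrow> 'w) \<Rightarrow> ('w \<Rightarrow> 'v) \<Rightarrow> ('f \<Rightarrow> 'd) \<Rightarrow>
   'x set \<Rightarrow> 'y set \<Rightarrow> ('y \<Rightarrow> 'x) \<Rightarrow> ('y \<Rightarrow> 'x) \<Rightarrow> ('x \<Rightarrow> 'v) \<Rightarrow> ('y \<Rightarrow> 'd) \<Rightarrow>
   ('w \<Rightarrow> 'x) \<Rightarrow> ('f \<Rightarrow> 'y) \<Rightarrow> bool" where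
  "rep_iso FV FE sF rF phi0 phi1 GV GE sG rG psi0 psi1 a0 a1 \<longleftrightarrow>
     bij_betw a0 FV GV \<and> bij_betw a1 FE GE \<and>
     (\<forall>f\<in>FE. a0 (sF f) = sG (a1 f) \<and> a0 (rF f) = rG (a1 f)) \<and>
     (\<forall>w\<in>FV. psi0 (a0 w) = phi0 w) \<and> (\<forall>f\<in>FE. psi1 (a1 f) = phi1 f)"

end

theory Submission imports Defs begin

lemma Re_dedges[simp]: "Re e \<in> dedges E1 \<longleftrightarrow> e \<in> E1"
  by (auto simp: dedges_def)
lemma Gh_dedges[simp]: "Gh e \<in> dedges E1 \<longleftrightarrow> e \<in> E1"
  by (auto simp: dedges_def)

lemma epath_cons: "epath E1 s r (e#q) \<longleftrightarrow> e \<in> E1 \<and> (q = [] \<or> (epath E1 s r q \<and> r e = s (hd q)))"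
proof
  assume h: "epath E1 s r (e#q)"
  then have A: "\<forall>i. Suc i < length (e#q) \<longrightarrow> r ((e#q) ! i) = s ((e#q) ! Suc i)"
    by (simp add: epath_def)
  show "e \<in> E1 \<and> (q = [] \<or> (epath E1 s r q \<and> r e = s (hd q)))"
  proof (cases q)
    case Nil then show ?thesis using h by (simp add: epath_def)
  next
    case (Cons a q')
    have "\<forall>i. Suc i < length q \<longrightarrow> r (q ! i) = s (q ! Suc i)"
    proof (intro allI impI)
      fix i assume "Suc i < length q"
      then show "r (q ! i) = s (q ! Suc i)" using A[rule_format, of "Suc i"] by simp
    qed
    moreover have "r e = s (hd q)" using A[rule_format, of 0] Cons by simp
    ultimately show ?thesis using h Cons by (simp add: epath_def)
  qed
next
  assume h: "e \<in> E1 \<and> (q = [] \<or> (epath E1 s r q \<and> r e = s (hd q)))"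
  show "epath E1 s r (e#q)"
  proof (cases "q = []")
    case True then show ?thesis using h by (simp add: epath_def)
  next
    case False
    then have q: "epath E1 s r q" "r e = s (hd q)" using h by auto
    have "\<forall>i. Suc i < length (e#q) \<longrightarrow> r ((e#q) ! i) = s ((e#q) ! Suc i)"
    proof (intro allI impI)
      fix i assume i: "Suc i < length (e#q)"
      show "r ((e#q) ! i) = s ((e#q) ! Suc i)"
      proof (cases i)
        case 0 then show ?thesis using q False by (simp add: hd_conv_nth)
      next
        case (Suc j) then show ?thesis using q i by (simp add: epath_def)
      qed
    qed
    then show ?thesis using h q by (auto simp: epath_def)
  qed
qed

lemma epath_snoc: "epath E1 s r (p@[e]) \<longleftrightarrow> e \<in> E1 \<and> (p = [] \<or> (epath E1 s r p \<and> r (last p) = s e))"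
proof
  assume h: "epath E1 s r (p@[e])"
  then have A: "\<forall>i. Suc i < length (p@[e]) \<longrightarrow> r ((p@[e]) ! i) = s ((p@[e]) ! Suc i)"
    by (simp add: epath_def)
  show "e \<in> E1 \<and> (p = [] \<or> (epath E1 s r p \<and> r (last p) = s e))"
  proof (cases "p = []")
    case True then show ?thesis using h by (simp add: epath_def)
  next
    case False
    have "\<forall>i. Suc i < length p \<longrightarrow> r (p ! i) = s (p ! Suc i)"
    proof (intro allI impI)
      fix i assume i: "Suc i < length p"
      then show "r (p ! i) = s (p ! Suc i)" using A[rule_format, of i] by (simp add: nth_append)
    qed
    moreover have "r (last p) = s e" using A[rule_format, of "length p - 1"] False
      by (simp add: nth_append last_conv_nth)
    ultimately show ?thesis using h False by (simp add: epath_def)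
  qed
next
  assume h: "e \<in> E1 \<and> (p = [] \<or> (epath E1 s r p \<and> r (last p) = s e))"
  show "epath E1 s r (p@[e])"
  proof (cases "p = []")
    case True then show ?thesis using h by (simp add: epath_def)
  next
    case False
    then have q: "epath E1 s r p" "r (last p) = s e" using h by auto
    have "\<forall>i. Suc i < length (p@[e]) \<longrightarrow> r ((p@[e]) ! i) = s ((p@[e]) ! Suc i)"
    proof (intro allI impI)
      fix i assume i: "Suc i < length (p@[e])"
      show "r ((p@[e]) ! i) = s ((p@[e]) ! Suc i)"
      proof (cases "Suc i < length p")
        case True then show ?thesis using q by (simp add: nth_append epath_def)
      next
        case False
        then have "i = length p - 1" using i by simp
        then show ?thesis using q False \<open>p \<noteq> []\<close> by (simp add: nth_append last_conv_nth)
      qed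
    qed
    then show ?thesis using h q by (auto simp: epath_def)
  qed
qed

definition allowedd :: "'e set \<Rightarrow> ('e \<Rightarrow> 'v) \<Rightarrow> ('e \<Rightarrow> 'v) \<Rightarrow> ('v \<Rightarrow> 'e) \<Rightarrow> 'v \<Rightarrow> 'e dedge list \<Rightarrow> 'e dedge \<Rightarrow> bool" where
  "allowedd E1 s r sp v x d \<longleftrightarrow> d \<in> dedges E1 \<and> sd s r d = Fv_phi0 s r v x \<and>
     (x \<noteq> [] \<longrightarrow> (case last x of Re e \<Rightarrow> (e = sp (s e) \<longrightarrow> d \<noteq> Gh e) | Gh e \<Rightarrow> is_ghost d))"

lemma epath_ne: "epath E1 s r p \<Longrightarrow> p \<noteq> []" by (simp add: epath_def)

lemma Xv_Nil[simp]: "[] \<in> Xv E1 s r sp v" by (simp add: Xv_def)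

lemma Xv_iff: "x \<in> Xv E1 s r sp v \<longleftrightarrow> x = [] \<or> basis_path E1 s r sp v x"
  by (auto simp: Xv_def)

lemma ghost_split: "q \<noteq> [] \<Longrightarrow> map Gh (rev q) = map Gh (rev (tl q)) @ [Gh (hd q)]"
  by (cases q) auto

lemma last_ghost: "q \<noteq> [] \<Longrightarrow> last (map Gh (rev q)) = Gh (hd q)"
  by (cases q) auto

lemma Xv_snoc_D:
  assumes "x @ [d] \<in> Xv E1 s r sp v"
  shows "x \<in> Xv E1 s r sp v \<and> allowedd E1 s r sp v x d"
proof -
  have b: "basis_path E1 s r sp v (x@[d])" using assms by (simp add: Xv_iff)
  then consider
     (c1) p where "epath E1 s r p" "s (hd p) = v" "x@[d] = map Re p"
   | (c2) q where "epath E1 s r q" "r (last q) = v" "x@[d] = map Gh (rev q)"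
   | (c3) p q where "epath E1 s r p" "epath E1 s r q" "s (hd p) = v" "r (last p) = r (last q)"
        "last p \<noteq> last q \<or> last p \<noteq> sp (s (last p))" "x@[d] = map Re p @ map Gh (rev q)"
    unfolding basis_path_def by blast
  then show ?thesis
  proof cases
    case c1
    define p' where "p' = butlast p"
    define e where "e = last p"
    have pe: "p = p' @ [e]" using epath_ne[OF c1(1)] p'_def e_def by simp
    have xd: "x = map Re p'" "d = Re e" using c1(3) pe by auto
    have ep: "e \<in> E1 \<and> (p' = [] \<or> (epath E1 s r p' \<and> r (last p') = s e))"
      using c1(1) pe epath_snoc by metis
    show ?thesis
    proof (cases "p' = []")
      case True then show ?thesis using xd ep c1 pe by (simp add: allowedd_def Fv_phi0_def)
    next
      case False
      then have "basis_path E1 s r sp v x" unfolding basis_path_def using ep xd c1 pe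
        by (intro disjI1 exI[of _ p']) (cases p', auto)
      then show ?thesis using xd ep False by (simp add: allowedd_def Fv_phi0_def Xv_iff last_map)
    qed
  next
    case c2
    have qne: "q \<noteq> []" using epath_ne[OF c2(1)] .
    have xd: "x = map Gh (rev (tl q))" "d = Gh (hd q)" using c2(3) ghost_split[OF qne] by auto
    have qc: "q = hd q # tl q" using qne by simp
    have ep: "hd q \<in> E1 \<and> (tl q = [] \<or> (epath E1 s r (tl q) \<and> r (hd q) = s (hd (tl q))))"
      using c2(1) qc epath_cons by metis
    show ?thesis
    proof (cases "tl q = []")
      case True
      then have "last q = hd q" using qc by (metis last_ConsL)
      then show ?thesis using xd ep c2 True by (simp add: allowedd_def Fv_phi0_def)
    next
      case False
      have "last (tl q) = last q" using False qc by (metis last_ConsR)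
      then have "basis_path E1 s r sp v x" unfolding basis_path_def using ep xd c2 False
        by (intro disjI2 disjI1 exI[of _ "tl q"]) simp
      then show ?thesis using xd ep False by (simp add: allowedd_def Fv_phi0_def Xv_iff last_ghost)
    qed
  next
    case c3
    have qne: "q \<noteq> []" using epath_ne[OF c3(2)] .
    have xd: "x = map Re p @ map Gh (rev (tl q))" "d = Gh (hd q)" using c3(6) ghost_split[OF qne] by auto
    have qc: "q = hd q # tl q" using qne by simp
    have ep: "hd q \<in> E1 \<and> (tl q = [] \<or> (epath E1 s r (tl q) \<and> r (hd q) = s (hd (tl q))))"
      using c3(2) qc epath_cons by metis
    have pne: "p \<noteq> []" using epath_ne[OF c3(1)] .
    show ?thesis
    proof (cases "tl q = []")
      case True
      then have lq: "last q = hd q" using qc by (metis last_ConsL)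
      have "basis_path E1 s r sp v x" unfolding basis_path_def using c3 xd True
        by (intro disjI1 exI[of _ p]) simp
      then show ?thesis using xd ep c3 True lq pne by (auto simp add: allowedd_def Fv_phi0_def Xv_iff last_map)
    next
      case False
      have "last (tl q) = last q" using False qc by (metis last_ConsR)
      then have "basis_path E1 s r sp v x" unfolding basis_path_def using ep xd c3 False
        by (intro disjI2 exI[of _ p] exI[of _ "tl q"]) simp
      then show ?thesis using xd ep False by (simp add: allowedd_def Fv_phi0_def Xv_iff last_ghost)
    qed
  qed
qed

lemma Xv_snoc_I:
  assumes x: "x \<in> Xv E1 s r sp v" and a: "allowedd E1 s r sp v x d"
  shows "x @ [d] \<in> Xv E1 s r sp v"
proof -
  have dE: "d \<in> dedges E1" and sdd: "sd s r d = Fv_phi0 s r v x" using a by (auto simp: allowedd_def)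
  obtain e where e: "e \<in> E1" "d = Re e \<or> d = Gh e" using dE by (auto simp: dedges_def)
  consider (c0) "x = []"
     | (c1) p where "epath E1 s r p" "s (hd p) = v" "x = map Re p"
     | (c2) q where "epath E1 s r q" "r (last q) = v" "x = map Gh (rev q)"
     | (c3) p q where "epath E1 s r p" "epath E1 s r q" "s (hd p) = v" "r (last p) = r (last q)"
        "last p \<noteq> last q \<or> last p \<noteq> sp (s (last p))" "x = map Re p @ map Gh (rev q)"
    using x unfolding Xv_iff basis_path_def by blast
  then have "basis_path E1 s r sp v (x @ [d])"
  proof cases
    case c0
    show ?thesis using e(2)
    proof (elim disjE)
      assume "d = Re e"
      then show ?thesis unfolding basis_path_def using c0 e sdd
        by (intro disjI1 exI[of _ "[e]"]) (simp add: epath_def Fv_phi0_def)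
    next
      assume "d = Gh e"
      then show ?thesis unfolding basis_path_def using c0 e sdd
        by (intro disjI2 disjI1 exI[of _ "[e]"]) (simp add: epath_def Fv_phi0_def)
    qed
  next
    case c1
    have pne: "p \<noteq> []" using epath_ne[OF c1(1)] .
    have cur: "Fv_phi0 s r v x = r (last p)" using c1 pne by (simp add: Fv_phi0_def last_map)
    show ?thesis using e(2)
    proof (elim disjE)
      assume de: "d = Re e"
      have "epath E1 s r (p@[e])" using epath_snoc[of E1 s r p e] c1 e sdd cur de by simp
      then show ?thesis unfolding basis_path_def using c1 de pne
        by (intro disjI1 exI[of _ "p@[e]"]) simp
    next
      assume de: "d = Gh e"
      have cond: "last p = sp (s (last p)) \<longrightarrow> e \<noteq> last p"
        using a c1 pne de by (auto simp: allowedd_def last_map)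
      have "epath E1 s r [e]" using e by (simp add: epath_def)
      then show ?thesis unfolding basis_path_def using c1 de pne sdd cur cond
        by (intro disjI2 exI[of _ p] exI[of _ "[e]"]) auto
    qed
  next
    case c2
    have qne: "q \<noteq> []" using epath_ne[OF c2(1)] .
    have lx: "last x = Gh (hd q)" using c2 qne by (simp add: last_ghost)
    have de: "d = Gh e" using a lx e qne c2 by (auto simp: allowedd_def)
    have cur: "r e = s (hd q)" using sdd lx de qne c2 by (simp add: Fv_phi0_def)
    have "epath E1 s r (e#q)" using epath_cons[of E1 s r e q] c2 e cur by simp
    then show ?thesis unfolding basis_path_def using c2 de qne
      by (intro disjI2 disjI1 exI[of _ "e#q"]) simp
  next
    case c3
    have qne: "q \<noteq> []" using epath_ne[OF c3(2)] .
    have lx: "last x = Gh (hd q)" using c3 qne by (simp add: last_ghost)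
    have de: "d = Gh e" using a lx e qne c3 by (auto simp: allowedd_def)
    have cur: "r e = s (hd q)" using sdd lx de qne c3 by (simp add: Fv_phi0_def)
    have "epath E1 s r (e#q)" using epath_cons[of E1 s r e q] c3 e cur by simp
    then show ?thesis unfolding basis_path_def using c3 de qne
      by (intro disjI2 exI[of _ p] exI[of _ "e#q"]) simp
  qed
  then show ?thesis by (simp add: Xv_iff)
qed

lemma Xv_snoc: "x @ [d] \<in> Xv E1 s r sp v \<longleftrightarrow> x \<in> Xv E1 s r sp v \<and> allowedd E1 s r sp v x d"
  using Xv_snoc_D Xv_snoc_I by metis

locale erg =
  fixes E0 :: "'v set" and E1 :: "'e set" and s r :: "'e \<Rightarrow> 'v" and sp :: "'v \<Rightarrow> 'e"
    and FV :: "'w set" and FE :: "'f set" and sF rF :: "'f \<Rightarrow> 'w"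
    and phi0 :: "'w \<Rightarrow> 'v" and phi1 :: "'f \<Rightarrow> 'e dedge" and w0 :: 'w
  assumes ext: "ext_rep_graph E0 E1 s r sp FV FE sF rF phi0 phi1"
    and conn: "connected_graph FV FE sF rF"
    and w0: "w0 \<in> FV" and src: "\<forall>f\<in>FE. rF f \<noteq> w0"
begin

abbreviation "v0 \<equiv> phi0 w0"
abbreviation "X \<equiv> Xv E1 s r sp v0"

lemma dg: "f \<in> FE \<Longrightarrow> sF f \<in> FV \<and> rF f \<in> FV"
  using ext by (auto simp: ext_rep_graph_def dgraph_def)

lemma homf: "f \<in> FE \<Longrightarrow> phi1 f \<in> dedges E1 \<and> phi0 (sF f) = sd s r (phi1 f) \<and> phi0 (rF f) = rd s r (phi1 f)"
  using ext by (auto simp: ext_rep_graph_def hom_to_double_def)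

lemma homv: "w \<in> FV \<Longrightarrow> phi0 w \<in> E0"
  using ext by (auto simp: ext_rep_graph_def hom_to_double_def)

lemma extw: "w \<in> FV \<Longrightarrow>
        (\<not> (\<exists>f\<in>FE. rF f = w) \<and> bij_betw phi1 {f\<in>FE. sF f = w} {d\<in>dedges E1. sd s r d = phi0 w})
       \<or> (\<exists>f\<in>FE. rF f = w \<and> (\<forall>g\<in>FE. rF g = w \<longrightarrow> g = f) \<and>
            (case phi1 f of
               Re e \<Rightarrow> (if e = sp (s e) then bij_betw phi1 {f\<in>FE. sF f = w} ({d\<in>dedges E1. sd s r d = phi0 w} - {Gh e})
                        else bij_betw phi1 {f\<in>FE. sF f = w} {d\<in>dedges E1. sd s r d = phi0 w})
             | Gh e \<Rightarrow> bij_betw phi1 {f\<in>FE. sF f = w} {d\<in>{d\<in>dedges E1. sd s r d = phi0 w}. is_ghost d}))"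
  using ext unfolding ext_rep_graph_def Let_def by blast

lemma uniq_in: "f \<in> FE \<Longrightarrow> g \<in> FE \<Longrightarrow> rF f = rF g \<Longrightarrow> f = g"
  using extw[of "rF f"] dg[of f] by metis

lemma bij_out:
  assumes w: "w \<in> FV" and x: "x \<in> X" and ph: "phi0 w = Fv_phi0 s r v0 x"
    and h0: "x = [] \<Longrightarrow> w = w0" and h1: "x \<noteq> [] \<Longrightarrow> \<exists>f\<in>FE. rF f = w \<and> phi1 f = last x"
  shows "bij_betw phi1 {f\<in>FE. sF f = w} {d. allowedd E1 s r sp v0 x d}"
proof (cases "x = []")
  case True
  then have "w = w0" using h0 by simp
  then have b: "bij_betw phi1 {f\<in>FE. sF f = w} {d\<in>dedges E1. sd s r d = phi0 w}"
    using extw[OF w] src by auto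
  have "{d. allowedd E1 s r sp v0 x d} = {d\<in>dedges E1. sd s r d = phi0 w}"
    using True \<open>w = w0\<close> by (auto simp: allowedd_def Fv_phi0_def)
  then show ?thesis using b by simp
next
  case False
  obtain f where f: "f \<in> FE" "rF f = w" "phi1 f = last x" using h1 False by blast
  then obtain f0 where f0: "f0 \<in> FE" "rF f0 = w" "\<forall>g\<in>FE. rF g = w \<longrightarrow> g = f0"
     "case phi1 f0 of
               Re e \<Rightarrow> (if e = sp (s e) then bij_betw phi1 {f\<in>FE. sF f = w} ({d\<in>dedges E1. sd s r d = phi0 w} - {Gh e})
                        else bij_betw phi1 {f\<in>FE. sF f = w} {d\<in>dedges E1. sd s r d = phi0 w})
             | Gh e \<Rightarrow> bij_betw phi1 {f\<in>FE. sF f = w} {d\<in>{d\<in>dedges E1. sd s r d = phi0 w}. is_ghost d}"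
    using extw[OF w] by blast
  have "f = f0" using f f0 by blast
  then have lx: "phi1 f0 = last x" using f by simp
  show ?thesis
  proof (cases "last x")
    case (Re e)
    show ?thesis
    proof (cases "e = sp (s e)")
      case True
      have "{d. allowedd E1 s r sp v0 x d} = {d\<in>dedges E1. sd s r d = phi0 w} - {Gh e}"
        using False Re True ph by (auto simp: allowedd_def)
      then show ?thesis using f0(4) lx Re True by simp
    next
      case nt: False
      have "{d. allowedd E1 s r sp v0 x d} = {d\<in>dedges E1. sd s r d = phi0 w}"
        using False Re nt ph by (auto simp: allowedd_def)
      then show ?thesis using f0(4) lx Re nt by simp
    qed
  next
    case (Gh e)
    have "{d. allowedd E1 s r sp v0 x d} = {d\<in>{d\<in>dedges E1. sd s r d = phi0 w}. is_ghost d}"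
      using False Gh ph by (auto simp: allowedd_def)
    then show ?thesis using f0(4) lx Gh by simp
  qed
qed

inductive R :: "'e dedge list \<Rightarrow> 'w \<Rightarrow> bool" where
  R0: "R [] w0"
| RS: "R x u \<Longrightarrow> f \<in> FE \<Longrightarrow> sF f = u \<Longrightarrow> R (x @ [phi1 f]) (rF f)"

lemma R1: "R x w \<Longrightarrow> x \<in> X \<and> w \<in> FV \<and> phi0 w = Fv_phi0 s r v0 x \<and> (x = [] \<longrightarrow> w = w0) \<and>
   (x \<noteq> [] \<longrightarrow> (\<exists>f\<in>FE. rF f = w \<and> phi1 f = last x \<and> R (butlast x) (sF f)))"
proof (induction rule: R.induct)
  case R0
  then show ?case using w0 by (simp add: Fv_phi0_def)
next
  case (RS x u f)
  have b: "bij_betw phi1 {f\<in>FE. sF f = u} {d. allowedd E1 s r sp v0 x d}"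
    using RS.IH by (intro bij_out) auto
  then have "allowedd E1 s r sp v0 x (phi1 f)" using RS.hyps by (auto simp: bij_betw_def)
  then have "x @ [phi1 f] \<in> X" using Xv_snoc_I RS.IH by metis
  moreover have "rF f \<in> FV" using dg RS.hyps by blast
  moreover have "phi0 (rF f) = Fv_phi0 s r v0 (x @ [phi1 f])" using homf RS.hyps by (simp add: Fv_phi0_def)
  ultimately show ?case using RS.hyps by auto
qed

lemma R_x: "R x w \<Longrightarrow> R y w \<Longrightarrow> x = y"
proof (induction x arbitrary: y w rule: rev_induct)
  case Nil
  then have "w = w0" using R1 by blast
  show ?case
  proof (rule ccontr)
    assume "[] \<noteq> y"
    then obtain f where "f \<in> FE" "rF f = w" using R1[OF Nil(2)] by metis
    then show False using src \<open>w = w0\<close> by blast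
  qed
next
  case (snoc d x)
  obtain f where f: "f \<in> FE" "rF f = w" "phi1 f = d" "R x (sF f)" using R1[OF snoc(2)] by auto
  have "y \<noteq> []"
  proof
    assume "y = []"
    then have "w = w0" using R1[OF snoc(3)] by blast
    then show False using src f by blast
  qed
  then obtain g where g: "g \<in> FE" "rF g = w" "phi1 g = last y" "R (butlast y) (sF g)" using R1[OF snoc(3)] by auto
  have "f = g" using uniq_in f g by metis
  then have "x = butlast y" using snoc.IH f g by metis
  then show ?case using \<open>y \<noteq> []\<close> f g \<open>f = g\<close> by (metis append_butlast_last_id)
qed

lemma R_w: "R x w \<Longrightarrow> R x w' \<Longrightarrow> w = w'"
proof (induction x arbitrary: w w' rule: rev_induct)
  case Nil
  then show ?case using R1 by blast
next
  case (snoc d x)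
  obtain f where f: "f \<in> FE" "rF f = w" "phi1 f = d" "R x (sF f)" using R1[OF snoc(2)] by auto
  obtain g where g: "g \<in> FE" "rF g = w'" "phi1 g = d" "R x (sF g)" using R1[OF snoc(3)] by auto
  have u: "sF f = sF g" using snoc.IH f g by metis
  have b: "bij_betw phi1 {h\<in>FE. sF h = sF f} {d. allowedd E1 s r sp v0 x d}"
    using R1[OF f(4)] by (intro bij_out) auto
  then have "f = g" using f g u by (auto simp: bij_betw_def inj_on_def)
  then show ?case using f g by simp
qed

lemma R_ex: "x \<in> X \<Longrightarrow> \<exists>w. R x w"
proof (induction x rule: rev_induct)
  case Nil
  then show ?case using R0 by blast
next
  case (snoc d x)
  have xa: "x \<in> X" "allowedd E1 s r sp v0 x d" using Xv_snoc_D[OF snoc.prems] by auto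
  then obtain u where u: "R x u" using snoc.IH by blast
  have b: "bij_betw phi1 {h\<in>FE. sF h = u} {d. allowedd E1 s r sp v0 x d}"
    using R1[OF u] by (intro bij_out) auto
  then obtain f where "f \<in> FE" "sF f = u" "phi1 f = d" using xa(2)
    unfolding bij_betw_def by (metis (mono_tags, lifting) imageE mem_Collect_eq)
  then show ?case using RS[OF u] by metis
qed

lemma R_all: assumes "w \<in> FV" shows "\<exists>x. R x w"
proof -
  let ?adj = "{(sF f, rF f) | f. f \<in> FE}"
  have "(w0, w) \<in> (?adj \<union> ?adj\<inverse>)\<^sup>*" using conn w0 assms
    unfolding connected_graph_def Let_def by blast
  then show ?thesis
  proof (induction rule: rtrancl_induct)
    case base
    then show ?case using R0 by blast
  next
    case (step b c)
    then obtain x where x: "R x b" by blast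
    from step.hyps(2) show ?case
    proof
      assume "(b, c) \<in> ?adj"
      then obtain f where "f \<in> FE" "sF f = b" "rF f = c" by blast
      then show ?case using RS[OF x] by metis
    next
      assume "(b, c) \<in> ?adj\<inverse>"
      then obtain f where f: "f \<in> FE" "sF f = c" "rF f = b" by blast
      have "x \<noteq> []"
      proof
        assume "x = []"
        then have "b = w0" using R1[OF x] by blast
        then show False using src f by blast
      qed
      then obtain g where g: "g \<in> FE" "rF g = b" "R (butlast x) (sF g)" using R1[OF x] by blast
      have "f = g" using uniq_in f g by metis
      then show ?case using f g by blast
    qed
  qed
qed

definition a0 :: "'w \<Rightarrow> 'e dedge list" where "a0 w = (THE x. R x w)"

lemma a0_eq: "R x w \<Longrightarrow> a0 w = x"
  unfolding a0_def using R_x by blast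

lemma a0R: "w \<in> FV \<Longrightarrow> R (a0 w) w"
  using R_all a0_eq by metis

lemma a0_edge: "f \<in> FE \<Longrightarrow> a0 (rF f) = a0 (sF f) @ [phi1 f]"
  using a0R[of "sF f"] dg[of f] RS a0_eq by metis

lemma main: "rep_iso FV FE sF rF phi0 phi1
           (Fv_V E1 s r sp v0) (Fv_E E1 s r sp v0) Fv_src Fv_rng (Fv_phi0 s r v0) Fv_phi1 a0 (\<lambda>f. a0 (rF f))"
proof -
  have inj0: "inj_on a0 FV"
    by (rule inj_onI) (metis a0R R_w)
  have img0: "a0 ` FV = X"
  proof
    show "a0 ` FV \<subseteq> X" using a0R R1 by blast
    show "X \<subseteq> a0 ` FV"
    proof
      fix x assume "x \<in> X"
      then obtain w where "R x w" using R_ex by blast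
      then show "x \<in> a0 ` FV" using R1 a0_eq by blast
    qed
  qed
  have inj1: "inj_on (\<lambda>f. a0 (rF f)) FE"
  proof (rule inj_onI)
    fix f g assume fg: "f \<in> FE" "g \<in> FE" "a0 (rF f) = a0 (rF g)"
    then have "rF f = rF g" using inj0 dg by (metis inj_onD)
    then show "f = g" using uniq_in fg by blast
  qed
  have img1: "(\<lambda>f. a0 (rF f)) ` FE = X - {[]}"
  proof
    show "(\<lambda>f. a0 (rF f)) ` FE \<subseteq> X - {[]}" using a0_edge img0 dg by fastforce
    show "X - {[]} \<subseteq> (\<lambda>f. a0 (rF f)) ` FE"
    proof
      fix x assume x: "x \<in> X - {[]}"
      then obtain w where w: "R x w" using R_ex by blast
      then obtain f where "f \<in> FE" "rF f = w" using R1[OF w] x by blast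
      then show "x \<in> (\<lambda>f. a0 (rF f)) ` FE" using a0_eq w by blast
    qed
  qed
  have ph: "\<And>w. w \<in> FV \<Longrightarrow> Fv_phi0 s r v0 (a0 w) = phi0 w" using a0R R1 by metis
  show ?thesis unfolding rep_iso_def Fv_V_def Fv_E_def
    using inj0 img0 inj1 img1 a0_edge ph
    by (auto simp: bij_betw_def Fv_src_def Fv_rng_def Fv_phi1_def)
qed

end

theorem proposition5p6:
  fixes E0 :: "'v set" and E1 :: "'e set" and s r :: "'e \<Rightarrow> 'v" and sp :: "'v \<Rightarrow> 'e"
    and FV :: "'w set" and FE :: "'f set" and sF rF :: "'f \<Rightarrow> 'w"
    and phi0 :: "'w \<Rightarrow> 'v" and phi1 :: "'f \<Rightarrow> 'e dedge"
  assumes "dgraph E0 E1 s r"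
    and "row_finite E0 E1 s"
    and "special_choice E0 E1 s sp"
    and "ext_rep_graph E0 E1 s r sp FV FE sF rF phi0 phi1"
    and "connected_graph FV FE sF rF"
    and "has_source FV FE rF"
  shows "\<exists>v\<in>E0. \<exists>a0 a1. rep_iso FV FE sF rF phi0 phi1
           (Fv_V E1 s r sp v) (Fv_E E1 s r sp v) Fv_src Fv_rng (Fv_phi0 s r v) Fv_phi1 a0 a1"
proof -
  obtain w0 where w0: "w0 \<in> FV" "\<forall>f\<in>FE. rF f \<noteq> w0"
    using assms(6) unfolding has_source_def by blast
  interpret erg E0 E1 s r sp FV FE sF rF phi0 phi1 w0
    using assms(4,5) w0 by unfold_locales auto
  show ?thesis using main homv[OF w0(1)] by blast
qed

end
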